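(* Let $(X,\Sigma,\mu)$ be a measure space, $n\ge1$, $\mathbb{F}\in\{\mathbb{R},\mathbb{C}\}$, $h\in L^2(X,\mu;\mathbb{F})$, and define $T:L^2(X,\mu;\mathbb{F}^n)\to\mathbb{F}^n$ by $T(F)=\int_X h(x)f_x\,d\mu(x)$ for $F=(f_x)_{x\in X}$. Suppose there is a measurable subset $Y\subseteq X$ such that $\dim L^2(Y,\mu;\mathbb{F})\ge n$ and $\mu\big((X\setminus Y)\cap h^{-1}(\mathbb{F}\setminus\{0\})\big)>0$. Then for every $d\in\mathbb{F}^n$, $T^{-1}(\{d\})$ contains a continuous frame $\Phi\in\mathcal{F}^{\mathbb{F}}_{(X,\mu),n}$.
   Context: A family $\Phi=(\varphi_x)_{x\in X}$ in $\mathbb{F}^n$ (with measurable coordinates) is a continuous frame indexed by $(X,\mu)$ if there are $0<A\le B$ with $A\|v\|^2\le\int_X|\langle v,\varphi_x\rangle|^2d\mu(x)\le B\|v\|^2$ for all $v\in\mathbb{F}^n$. $\mathcal{F}^{\mathbb{F}}_{(X,\mu),n}$ denotes the set of such frames, viewed as a subset of $L^2(X,\mu;\mathbb{F}^n)$. $L^2(Y,\mu;\mathbb{F})$ is the $L^2$ space of the restriction of $\mu$ to $Y$. *)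

theory Defs
  imports "HOL-Analysis.Analysis"
begin

definition L2 :: "'b measure \<Rightarrow> ('b \<Rightarrow> 'v::{banach,second_countable_topology}) set" where
  "L2 M = {f. f \<in> borel_measurable M \<and> integrable M (\<lambda>x. (norm (f x))\<^sup>2)}"

text \<open>dim L2(N; F) >= n, F given by the type 'a: there are n elements of L2(N;F)
  whose classes modulo a.e.-equality are linearly independent over F.\<close>
definition L2_dim_at_least ::
  "'a::{real_normed_field,banach,second_countable_topology} itself \<Rightarrow> 'b measure \<Rightarrow> nat \<Rightarrow> bool" where
  "L2_dim_at_least _ N n \<longleftrightarrow>
     (\<exists>f :: nat \<Rightarrow> 'b \<Rightarrow> 'a. (\<forall>i<n. f i \<in> L2 N) \<and>
        (\<forall>c :: nat \<Rightarrow> 'a. (AE x in N. (\<Sum>i<n. c i * f i x) = 0) \<longrightarrow> (\<forall>i<n. c i = 0)))"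

definition rinner :: "real^'n \<Rightarrow> real^'n \<Rightarrow> real" where
  "rinner v w = (\<Sum>i\<in>UNIV. v $ i * w $ i)"

definition cinner :: "complex^'n \<Rightarrow> complex^'n \<Rightarrow> complex" where
  "cinner v w = (\<Sum>i\<in>UNIV. v $ i * cnj (w $ i))"

definition cont_frame_real :: "'b measure \<Rightarrow> ('b \<Rightarrow> real^'n) \<Rightarrow> bool" where
  "cont_frame_real M \<Phi> \<longleftrightarrow> \<Phi> \<in> borel_measurable M \<and>
     (\<exists>A B. 0 < A \<and> A \<le> B \<and>
       (\<forall>v::real^'n.
          ennreal (A * (norm v)\<^sup>2) \<le> (\<integral>\<^sup>+x. ennreal ((\<bar>rinner v (\<Phi> x)\<bar>)\<^sup>2) \<partial>M) \<and>
          (\<integral>\<^sup>+x. ennreal ((\<bar>rinner v (\<Phi> x)\<bar>)\<^sup>2) \<partial>M) \<le> ennreal (B * (norm v)\<^sup>2)))"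

definition cont_frame_complex :: "'b measure \<Rightarrow> ('b \<Rightarrow> complex^'n) \<Rightarrow> bool" where
  "cont_frame_complex M \<Phi> \<longleftrightarrow> \<Phi> \<in> borel_measurable M \<and>
     (\<exists>A B. 0 < A \<and> A \<le> B \<and>
       (\<forall>v::complex^'n.
          ennreal (A * (norm v)\<^sup>2) \<le> (\<integral>\<^sup>+x. ennreal ((cmod (cinner v (\<Phi> x)))\<^sup>2) \<partial>M) \<and>
          (\<integral>\<^sup>+x. ennreal ((cmod (cinner v (\<Phi> x)))\<^sup>2) \<partial>M) \<le> ennreal (B * (norm v)\<^sup>2)))"

end

theory Submission
  imports Defs
begin


lemma frame_lower:
  fixes p :: "'v::euclidean_space \<Rightarrow> 'b \<Rightarrow> real" and g :: "'b \<Rightarrow> real"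
  assumes meas: "\<And>v. p v \<in> borel_measurable M"
    and gm: "g \<in> borel_measurable M" and gi: "integrable M (\<lambda>x. (g x)\<^sup>2)"
    and gnn: "\<And>x. 0 \<le> g x" and pnn: "\<And>v x. 0 \<le> p v x"
    and lip: "\<And>v w x. \<bar>p v x - p w x\<bar> \<le> norm (v - w) * g x"
    and p0: "\<And>x. p 0 x = 0"
    and hom: "\<And>t v x. p (t *\<^sub>R v) x = \<bar>t\<bar> * p v x"
    and nondeg: "\<And>v. (AE x in M. p v x = 0) \<Longrightarrow> v = 0"
  shows "\<exists>A>0. \<forall>v. A * (norm v)\<^sup>2 \<le> (\<integral>x. (p v x)\<^sup>2 \<partial>M)"
    and "\<And>v. integrable M (\<lambda>x. (p v x)\<^sup>2)"
    and "\<And>v. (\<integral>x. (p v x)\<^sup>2 \<partial>M) \<le> (norm v)\<^sup>2 * (\<integral>x. (g x)\<^sup>2 \<partial>M)"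
proof -
  have pb: "p v x \<le> norm v * g x" for v x
    using lip[where v=v and w=0 and x=x] p0 pnn[of v x] by simp
  have sq: "(p v x)\<^sup>2 \<le> (norm v)\<^sup>2 * (g x)\<^sup>2" for v x
    using power_mono[OF pb[of v x] pnn] by (simp add: power_mult_distrib)
  show int: "integrable M (\<lambda>x. (p v x)\<^sup>2)" for v
    apply (rule Bochner_Integration.integrable_bound[of _ "\<lambda>x. (norm v)\<^sup>2 * (g x)\<^sup>2"])
    using gi meas[of v] sq by auto
  show ub: "(\<integral>x. (p v x)\<^sup>2 \<partial>M) \<le> (norm v)\<^sup>2 * (\<integral>x. (g x)\<^sup>2 \<partial>M)" for v
  proof -
    have "(\<integral>x. (p v x)\<^sup>2 \<partial>M) \<le> (\<integral>x. (norm v)\<^sup>2 * (g x)\<^sup>2 \<partial>M)"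
      by (rule integral_mono) (use int gi sq in auto)
    then show ?thesis by simp
  qed
  define q where "q v = (\<integral>x. (p v x)\<^sup>2 \<partial>M)" for v
  define G where "G = (\<integral>x. (g x)\<^sup>2 \<partial>M)"
  have G0: "G \<ge> 0" unfolding G_def by (rule integral_nonneg_AE) auto
  have qdiff: "\<bar>q v - q w\<bar> \<le> norm (v - w) * (norm v + norm w) * G" for v w
  proof -
    have pt: "\<bar>(p v x)\<^sup>2 - (p w x)\<^sup>2\<bar> \<le> norm (v - w) * (norm v + norm w) * (g x)\<^sup>2" for x
    proof -
      have "\<bar>(p v x)\<^sup>2 - (p w x)\<^sup>2\<bar> = \<bar>p v x - p w x\<bar> * (p v x + p w x)"
      proof -
        have "(p v x)\<^sup>2 - (p w x)\<^sup>2 = (p v x - p w x) * (p v x + p w x)"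
          by (simp add: power2_eq_square algebra_simps)
        then show ?thesis using pnn[of v x] pnn[of w x] by (simp add: abs_mult)
      qed
      also have "\<dots> \<le> (norm (v - w) * g x) * ((norm v + norm w) * g x)"
        apply (rule mult_mono) using lip[where v=v and w=w and x=x] pb[of v x] pb[of w x] pnn[of v x] pnn[of w x] gnn[of x]
        by (auto simp: algebra_simps)
      finally show ?thesis by (simp add: power2_eq_square algebra_simps)
    qed
    have "\<bar>q v - q w\<bar> = \<bar>\<integral>x. (p v x)\<^sup>2 - (p w x)\<^sup>2 \<partial>M\<bar>"
      unfolding q_def using int by simp
    also have "\<dots> \<le> (\<integral>x. \<bar>(p v x)\<^sup>2 - (p w x)\<^sup>2\<bar> \<partial>M)"
      by (rule integral_abs_bound)
    also have "\<dots> \<le> (\<integral>x. norm (v - w) * (norm v + norm w) * (g x)\<^sup>2 \<partial>M)"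
      by (rule integral_mono) (use int gi pt in auto)
    also have "\<dots> = norm (v - w) * (norm v + norm w) * G" unfolding G_def by simp
    finally show ?thesis .
  qed
  let ?S = "sphere (0::'v) 1"
  have cont: "continuous_on ?S q"
    unfolding continuous_on_iff
  proof (intro ballI allI impI)
    fix x e assume x: "x \<in> ?S" and e: "(0::real) < e"
    show "\<exists>d>0. \<forall>x'\<in>?S. dist x' x < d \<longrightarrow> dist (q x') (q x) < e"
    proof (intro exI[of _ "e / (2 * G + 1)"] conjI ballI impI)
      show "0 < e / (2 * G + 1)" using e G0 by auto
      fix y assume y: "y \<in> ?S" and d: "dist y x < e / (2 * G + 1)"
      have "dist (q y) (q x) \<le> norm (y - x) * 2 * G"
        using qdiff[of y x] x y by (simp add: dist_real_def)
      also have "\<dots> \<le> (e / (2 * G + 1)) * (2 * G)"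
        using mult_right_mono[OF less_imp_le[OF d], of "2*G"] G0 by (simp add: dist_norm mult.assoc)
      also have "\<dots> < e" using e G0 by (simp add: field_simps)
      finally show "dist (q y) (q x) < e" .
    qed
  qed
  obtain b :: 'v where b: "b \<in> Basis" using nonempty_Basis by blast
  have ne: "?S \<noteq> {}" using b by (auto intro!: exI[of _ b])
  obtain v0 where v0: "v0 \<in> ?S" and min: "\<And>y. y \<in> ?S \<Longrightarrow> q v0 \<le> q y"
    using continuous_attains_inf[OF compact_sphere ne cont] by blast
  have qhom: "q (t *\<^sub>R v) = t\<^sup>2 * q v" for t v
    unfolding q_def hom by (simp add: power_mult_distrib)
  have "q v0 \<noteq> 0"
  proof
    assume "q v0 = 0"
    then have "AE x in M. (p v0 x)\<^sup>2 = 0"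
      unfolding q_def using integral_nonneg_eq_0_iff_AE[OF int] by simp
    then have "AE x in M. p v0 x = 0" by simp
    then have "v0 = 0" by (rule nondeg)
    with v0 show False by simp
  qed
  moreover have "q v0 \<ge> 0" unfolding q_def by (rule integral_nonneg_AE) auto
  ultimately have A: "q v0 > 0" by simp
  have "\<forall>v. q v0 * (norm v)\<^sup>2 \<le> q v"
  proof
    fix v :: 'v
    show "q v0 * (norm v)\<^sup>2 \<le> q v"
    proof (cases "v = 0")
      case True then show ?thesis unfolding q_def using p0 by simp
    next
      case False
      let ?u = "(1 / norm v) *\<^sub>R v"
      have u: "?u \<in> ?S" using False by simp
      have "v = norm v *\<^sub>R ?u" using False by simp
      then have "q v = (norm v)\<^sup>2 * q ?u" using qhom by metis
      with min[OF u] show ?thesis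
        by (metis mult.commute mult_left_mono zero_le_power2)
    qed
  qed
  with A show "\<exists>A>0. \<forall>v. A * (norm v)\<^sup>2 \<le> (\<integral>x. (p v x)\<^sup>2 \<partial>M)"
    unfolding q_def by blast
qed




lemma vec_nth_meas[measurable (raw)]:
  fixes f :: "'b \<Rightarrow> 'a::real_normed_vector ^'n"
  shows "f \<in> borel_measurable M \<Longrightarrow> (\<lambda>x. f x $ i) \<in> borel_measurable M"
  by (rule borel_measurable_continuous_on[where f="\<lambda>v. v $ i"])
     (auto intro: linear_continuous_on bounded_linear_vec_nth)

lemma vec_meas:
  fixes f :: "'b \<Rightarrow> 'a::euclidean_space ^'n"
  assumes "\<And>i. (\<lambda>x. f x $ i) \<in> borel_measurable M"
  shows "f \<in> borel_measurable M"
proof -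
  define E where "E i a = (\<chi> j. if j = i then a else (0::'a))" for i :: 'n and a
  have feq: "f = (\<lambda>x. \<Sum>i\<in>UNIV. E i (f x $ i))"
  proof (rule ext)
    fix x
    show "f x = (\<Sum>i\<in>UNIV. E i (f x $ i))"
      unfolding vec_eq_iff
    proof
      fix j
      have "(\<Sum>i\<in>UNIV. E i (f x $ i)) $ j = (\<Sum>i\<in>UNIV. E i (f x $ i) $ j)"
        by (rule sum_component)
      also have "\<dots> = (\<Sum>i\<in>UNIV. if j = i then f x $ i else 0)"
        unfolding E_def by (rule sum.cong) simp_all
      also have "\<dots> = f x $ j" by (subst sum.delta') simp_all
      finally show "f x $ j = (\<Sum>i\<in>UNIV. E i (f x $ i)) $ j" by simp
    qed
  qed
  have mi: "(\<lambda>x. E i (f x $ i)) \<in> borel_measurable M" for i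
  proof (rule borel_measurable_continuous_on[OF _ assms])
    show "continuous_on UNIV (E i)" unfolding E_def
    proof (rule continuous_on_vec_lambda)
      fix j show "continuous_on UNIV (\<lambda>a. if j = i then a else (0::'a))"
        by (cases "j = i") (auto intro: continuous_on_const continuous_on_id)
    qed
  qed
  have "(\<lambda>x. \<Sum>i\<in>UNIV. E i (f x $ i)) \<in> borel_measurable M"
    by (rule borel_measurable_sum) (rule mi)
  then show ?thesis by (simp only: feq[symmetric])
qed

lemma L2_D: "f \<in> L2 M \<Longrightarrow> f \<in> borel_measurable M"
  "f \<in> L2 M \<Longrightarrow> integrable M (\<lambda>x. (norm (f x))\<^sup>2)"
  by (auto simp: L2_def)

lemma prod_bound: "\<bar>(a::real) * b\<bar> \<le> a\<^sup>2 + b\<^sup>2"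
proof -
  have "0 \<le> (\<bar>a\<bar> - \<bar>b\<bar>)\<^sup>2" by simp
  then have "2 * (\<bar>a\<bar> * \<bar>b\<bar>) \<le> \<bar>a\<bar>\<^sup>2 + \<bar>b\<bar>\<^sup>2" by (simp add: power2_diff)
  moreover have "0 \<le> \<bar>a\<bar> * \<bar>b\<bar>" by simp
  ultimately show ?thesis unfolding abs_mult using power2_abs[of a] power2_abs[of b] by linarith
qed

lemma L2_add:
  fixes f g :: "'b \<Rightarrow> 'v::{banach,second_countable_topology}"
  assumes "f \<in> L2 M" "g \<in> L2 M"
  shows "(\<lambda>x. f x + g x) \<in> L2 M"
proof -
  have b: "(norm (a + b))\<^sup>2 \<le> 2 * (norm a)\<^sup>2 + 2 * (norm b)\<^sup>2" for a b :: 'v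
  proof -
    have "(norm (a + b))\<^sup>2 \<le> (norm a + norm b)\<^sup>2"
      by (rule power_mono[OF norm_triangle_ineq]) simp
    also have "\<dots> \<le> 2 * (norm a)\<^sup>2 + 2 * (norm b)\<^sup>2"
    proof -
      have "0 \<le> (norm a - norm b)\<^sup>2" by simp
      then show ?thesis by (simp add: power2_sum power2_diff)
    qed
    finally show ?thesis .
  qed
  have m: "(\<lambda>x. f x + g x) \<in> borel_measurable M" using assms by (auto simp: L2_def)
  have "integrable M (\<lambda>x. (norm (f x + g x))\<^sup>2)"
  proof (rule Bochner_Integration.integrable_bound[where f="\<lambda>x. 2 * (norm (f x))\<^sup>2 + 2 * (norm (g x))\<^sup>2"])
    show "integrable M (\<lambda>x. 2 * (norm (f x))\<^sup>2 + 2 * (norm (g x))\<^sup>2)"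
      by (rule Bochner_Integration.integrable_add; rule Bochner_Integration.integrable_mult_right)
         (use L2_D(2)[OF assms(1)] L2_D(2)[OF assms(2)] in auto)
    show "(\<lambda>x. (norm (f x + g x))\<^sup>2) \<in> borel_measurable M" using m by measurable
    show "AE x in M. norm ((norm (f x + g x))\<^sup>2) \<le> norm (2 * (norm (f x))\<^sup>2 + 2 * (norm (g x))\<^sup>2)"
      using b by (intro AE_I2) simp
  qed
  with m show ?thesis by (simp add: L2_def)
qed

lemma L2_times:
  fixes f g :: "'b \<Rightarrow> 'a::{real_normed_field,banach,second_countable_topology}"
  assumes "f \<in> L2 M" "g \<in> L2 M"
  shows "integrable M (\<lambda>x. f x * g x)"
proof (rule Bochner_Integration.integrable_bound[where f="\<lambda>x. (norm (f x))\<^sup>2 + (norm (g x))\<^sup>2"])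
  show "integrable M (\<lambda>x. (norm (f x))\<^sup>2 + (norm (g x))\<^sup>2)"
    by (rule Bochner_Integration.integrable_add[OF L2_D(2)[OF assms(1)] L2_D(2)[OF assms(2)]])
  show "(\<lambda>x. f x * g x) \<in> borel_measurable M" using assms by (auto simp: L2_def)
  show "AE x in M. norm (f x * g x) \<le> norm ((norm (f x))\<^sup>2 + (norm (g x))\<^sup>2)"
  proof (intro AE_I2)
    fix x
    have "norm (f x * g x) \<le> (norm (f x))\<^sup>2 + (norm (g x))\<^sup>2"
      using prod_bound[of "norm (f x)" "norm (g x)"] by (simp add: norm_mult)
    then show "norm (f x * g x) \<le> norm ((norm (f x))\<^sup>2 + (norm (g x))\<^sup>2)" by simp
  qed
qed




lemma frame_bounds:
  fixes p :: "'v::euclidean_space \<Rightarrow> 'b \<Rightarrow> real" and g :: "'b \<Rightarrow> real"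
  assumes meas: "\<And>v. p v \<in> borel_measurable M"
    and gm: "g \<in> borel_measurable M" and gi: "integrable M (\<lambda>x. (g x)\<^sup>2)"
    and gnn: "\<And>x. 0 \<le> g x" and pnn: "\<And>v x. 0 \<le> p v x"
    and lip: "\<And>v w x. \<bar>p v x - p w x\<bar> \<le> norm (v - w) * g x"
    and p0: "\<And>x. p 0 x = 0"
    and hom: "\<And>t v x. p (t *\<^sub>R v) x = \<bar>t\<bar> * p v x"
    and nondeg: "\<And>v. (AE x in M. p v x = 0) \<Longrightarrow> v = 0"
  shows "\<exists>A B. 0 < A \<and> A \<le> B \<and> (\<forall>v. ennreal (A * (norm v)\<^sup>2) \<le> (\<integral>\<^sup>+x. ennreal ((p v x)\<^sup>2) \<partial>M) \<and>
           (\<integral>\<^sup>+x. ennreal ((p v x)\<^sup>2) \<partial>M) \<le> ennreal (B * (norm v)\<^sup>2))"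
proof -
  have fl1: "\<exists>A>0. \<forall>v. A * (norm v)\<^sup>2 \<le> (\<integral>x. (p v x)\<^sup>2 \<partial>M)"
    by (rule frame_lower(1)[of p M g]) (use assms in auto)
  have fl2: "integrable M (\<lambda>x. (p v x)\<^sup>2)" for v
    by (rule frame_lower(2)[of p M g]) (use assms in auto)
  have fl3: "(\<integral>x. (p v x)\<^sup>2 \<partial>M) \<le> (norm v)\<^sup>2 * (\<integral>x. (g x)\<^sup>2 \<partial>M)" for v
    by (rule frame_lower(3)[of p M g]) (use assms in auto)
  obtain A where A: "A > 0" "\<And>v. A * (norm v)\<^sup>2 \<le> (\<integral>x. (p v x)\<^sup>2 \<partial>M)" using fl1 by blast
  define G where "G = (\<integral>x. (g x)\<^sup>2 \<partial>M)"
  define B where "B = max A G"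
  have eq: "(\<integral>\<^sup>+x. ennreal ((p v x)\<^sup>2) \<partial>M) = ennreal (\<integral>x. (p v x)\<^sup>2 \<partial>M)" for v
    by (rule nn_integral_eq_integral[OF fl2]) (intro AE_I2, simp)
  have up: "(\<integral>x. (p v x)\<^sup>2 \<partial>M) \<le> B * (norm v)\<^sup>2" for v
  proof -
    have "(\<integral>x. (p v x)\<^sup>2 \<partial>M) \<le> (norm v)\<^sup>2 * G" using fl3[of v] unfolding G_def .
    also have "\<dots> \<le> (norm v)\<^sup>2 * B" by (rule mult_left_mono) (auto simp: B_def)
    finally show ?thesis by (simp add: mult.commute)
  qed
  show ?thesis
    apply (rule exI[of _ A], rule exI[of _ B])
    using A up by (auto simp: eq B_def intro!: ennreal_leI)
qed

lemma rinner_inner: "rinner v w = inner v w"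
  by (simp add: rinner_def inner_vec_def)

lemma norm_smult_vec: "norm ((a::'a::real_normed_field) *s (v::'a^'n)) = norm a * norm v"
  by (simp add: norm_vec_def norm_mult L2_set_right_distrib)

lemma smul_meas:
  fixes a :: "'b \<Rightarrow> 'a::{real_normed_field,euclidean_space}" and G :: "'b \<Rightarrow> 'a^'n"
  assumes "a \<in> borel_measurable M" "G \<in> borel_measurable M"
  shows "(\<lambda>x. a x *s G x) \<in> borel_measurable M"
  by (rule vec_meas) (simp, intro borel_measurable_times assms vec_nth_meas)

lemma L2_smul_int:
  fixes a :: "'b \<Rightarrow> 'a::{real_normed_field,euclidean_space}" and G :: "'b \<Rightarrow> 'a^'n"
  assumes "a \<in> L2 M" "G \<in> L2 M"
  shows "integrable M (\<lambda>x. a x *s G x)"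
proof (rule Bochner_Integration.integrable_bound[where f="\<lambda>x. (norm (a x))\<^sup>2 + (norm (G x))\<^sup>2"])
  show "integrable M (\<lambda>x. (norm (a x))\<^sup>2 + (norm (G x))\<^sup>2)"
    by (rule Bochner_Integration.integrable_add[OF L2_D(2)[OF assms(1)] L2_D(2)[OF assms(2)]])
  show "(\<lambda>x. a x *s G x) \<in> borel_measurable M"
    by (rule smul_meas[OF L2_D(1)[OF assms(1)] L2_D(1)[OF assms(2)]])
  show "AE x in M. norm (a x *s G x) \<le> norm ((norm (a x))\<^sup>2 + (norm (G x))\<^sup>2)"
  proof (intro AE_I2)
    fix x
    have "norm (a x *s G x) \<le> (norm (a x))\<^sup>2 + (norm (G x))\<^sup>2"
      using prod_bound[of "norm (a x)" "norm (G x)"] by (simp add: norm_smult_vec)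
    then show "norm (a x *s G x) \<le> norm ((norm (a x))\<^sup>2 + (norm (G x))\<^sup>2)" by simp
  qed
qed

lemma bl_smul: "bounded_linear (\<lambda>a::'a::real_normed_field. a *s (c::'a^'n))"
proof (rule bounded_linear_intro[where K="norm c"])
  show "(x + y) *s c = x *s c + y *s c" for x y by (rule vector_sadd_rdistrib)
  show "(r *\<^sub>R x) *s c = r *\<^sub>R (x *s c)" for r x by (simp add: vec_eq_iff)
  show "norm (x *s c) \<le> norm x * norm c" for x by (simp add: norm_smult_vec)
qed

lemma integral_smul_const:
  fixes a :: "'b \<Rightarrow> 'a::{real_normed_field,euclidean_space}"
  assumes "integrable M a"
  shows "integrable M (\<lambda>x. a x *s c)" "(\<integral>x. a x *s (c::'a^'n) \<partial>M) = (\<integral>x. a x \<partial>M) *s c"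
  using integrable_bounded_linear[OF bl_smul assms] integral_bounded_linear[OF bl_smul assms] by auto

lemma L2_smul_const:
  fixes a :: "'b \<Rightarrow> 'a::{real_normed_field,euclidean_space}"
  assumes "a \<in> L2 M"
  shows "(\<lambda>x. a x *s (c::'a^'n)) \<in> L2 M"
proof -
  have m: "(\<lambda>x. a x *s c) \<in> borel_measurable M"
    by (rule smul_meas[OF L2_D(1)[OF assms]]) simp
  have "integrable M (\<lambda>x. (norm (a x))\<^sup>2 * (norm c)\<^sup>2)"
    by (rule Bochner_Integration.integrable_mult_left) (use L2_D(2)[OF assms] in simp)
  then have "integrable M (\<lambda>x. (norm (a x *s c))\<^sup>2)"
    by (simp add: norm_smult_vec power_mult_distrib)
  with m show ?thesis by (simp add: L2_def)
qed




lemma real_case: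
  fixes M :: "'b measure" and h :: "'b \<Rightarrow> real" and d :: "real^'n"
  assumes h: "h \<in> L2 M" and Y: "Y \<in> sets M"
    and dim: "L2_dim_at_least TYPE(real) (restrict_space M Y) CARD('n)"
    and pos: "emeasure M ((space M - Y) \<inter> {x \<in> space M. h x \<noteq> 0}) > 0"
  shows "\<exists>\<Phi> :: 'b \<Rightarrow> real^'n. \<Phi> \<in> L2 M \<and> cont_frame_real M \<Phi> \<and> (\<integral>x. h x *s \<Phi> x \<partial>M) = d"
proof -
  obtain f :: "nat \<Rightarrow> 'b \<Rightarrow> real" where fL2: "\<And>i. i < CARD('n) \<Longrightarrow> f i \<in> L2 (restrict_space M Y)"
    and indep: "\<And>c. (AE x in restrict_space M Y. (\<Sum>i<CARD('n). c i * f i x) = 0) \<Longrightarrow> \<forall>i<CARD('n). c i = 0"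
    using dim unfolding L2_dim_at_least_def by blast
  obtain e :: "'n \<Rightarrow> nat" where e: "bij_betw e UNIV {0..<CARD('n)}"
    using ex_bij_betw_finite_nat[of "UNIV::'n set"] by auto
  have eless: "e i < CARD('n)" for i using e by (auto simp: bij_betw_def)
  have einj: "inj e" using e by (auto simp: bij_betw_def)
  have YM: "Y \<inter> space M \<in> sets M" using Y by auto
  have hm[measurable]: "h \<in> borel_measurable M" using h by (simp add: L2_def)
  have [measurable]: "Y \<in> sets M" by (rule Y)
  define F where "F i x = indicator Y x * f (e i) x" for i x
  have Fm: "F i \<in> borel_measurable M" for i
  proof -
    have "f (e i) \<in> borel_measurable (restrict_space M Y)" using fL2[OF eless] by (simp add: L2_def)
    then have "(\<lambda>x. indicator Y x *\<^sub>R f (e i) x) \<in> borel_measurable M"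
      using borel_measurable_restrict_space_iff[OF YM] by blast
    then show ?thesis unfolding F_def by simp
  qed
  have Fi: "integrable M (\<lambda>x. (F i x)\<^sup>2)" for i
  proof -
    have "integrable (restrict_space M Y) (\<lambda>x. (norm (f (e i) x))\<^sup>2)" using fL2[OF eless] by (simp add: L2_def)
    then have 1: "integrable M (\<lambda>x. indicator Y x *\<^sub>R (norm (f (e i) x))\<^sup>2)"
      by (simp only: integrable_restrict_space[OF YM])
    have 2: "(\<lambda>x. indicator Y x *\<^sub>R (norm (f (e i) x))\<^sup>2) = (\<lambda>x. (F i x)\<^sup>2)"
      by (rule ext) (simp add: F_def indicator_def)
    show ?thesis using 1 unfolding 2 .
  qed
  define \<Psi> where "\<Psi> x = (\<chi> i. F i x)" for x
  have \<Psi>m: "\<Psi> \<in> borel_measurable M" by (rule vec_meas) (simp add: \<Psi>_def Fm)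
  have norm\<Psi>: "(norm (\<Psi> x))\<^sup>2 = (\<Sum>i\<in>UNIV. (F i x)\<^sup>2)" for x
    by (simp add: \<Psi>_def norm_vec_def L2_set_def sum_nonneg)
  have "integrable M (\<lambda>x. \<Sum>i\<in>UNIV. (F i x)\<^sup>2)"
    by (rule Bochner_Integration.integrable_sum) (rule Fi)
  then have \<Psi>L2: "\<Psi> \<in> L2 M" using \<Psi>m by (simp add: L2_def norm\<Psi>)
  define Z where "Z = (space M - Y) \<inter> {x \<in> space M. h x \<noteq> 0}"
  have Zm[measurable]: "Z \<in> sets M" unfolding Z_def by measurable
  define m where "m x = indicator Z x * h x" for x
  have mL2: "m \<in> L2 M"
  proof -
    have "m \<in> borel_measurable M" unfolding m_def by measurable
    moreover have "integrable M (\<lambda>x. indicator Z x *\<^sub>R (norm (h x))\<^sup>2)"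
      by (rule integrable_mult_indicator[OF Zm]) (use h in \<open>simp add: L2_def\<close>)
    moreover have "indicator Z x *\<^sub>R (norm (h x))\<^sup>2 = (norm (m x))\<^sup>2" for x
      by (simp add: m_def indicator_def)
    ultimately show ?thesis by (simp add: L2_def)
  qed
  define \<alpha> where "\<alpha> = (\<integral>x. h x * m x \<partial>M)"
  have hmint: "integrable M (\<lambda>x. h x * m x)" by (rule L2_times[OF h mL2])
  have hm_eq: "h x * m x = indicator Z x * (h x)\<^sup>2" for x
    by (simp add: m_def indicator_def power2_eq_square)
  have \<alpha>0: "\<alpha> \<noteq> 0"
  proof
    assume "\<alpha> = 0"
    then have "AE x in M. h x * m x = 0"
      unfolding \<alpha>_def using integral_nonneg_eq_0_iff_AE[OF hmint] by (simp add: hm_eq)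
    then have "AE x in M. x \<notin> Z"
      by eventually_elim (auto simp: hm_eq Z_def indicator_def)
    then have "emeasure M Z = 0"
      using AE_iff_measurable[OF Zm, of "\<lambda>x. x \<notin> Z"] sets.sets_into_space[OF Zm] by auto
    with pos show False unfolding Z_def by simp
  qed
  define e0 where "e0 = (\<integral>x. h x *s \<Psi> x \<partial>M)"
  define c where "c = inverse \<alpha> *s (d - e0)"
  define \<Phi> where "\<Phi> x = \<Psi> x + m x *s c" for x
  have \<Phi>L2: "\<Phi> \<in> L2 M" unfolding \<Phi>_def by (rule L2_add[OF \<Psi>L2 L2_smul_const[OF mL2]])
  have \<Phi>m: "\<Phi> \<in> borel_measurable M" using \<Phi>L2 by (rule L2_D)
  have int1: "integrable M (\<lambda>x. h x *s \<Psi> x)" by (rule L2_smul_int[OF h \<Psi>L2])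
  have "(\<integral>x. h x *s \<Phi> x \<partial>M) = (\<integral>x. h x *s \<Psi> x + (h x * m x) *s c \<partial>M)"
    unfolding \<Phi>_def by (simp add: vector_add_ldistrib vector_smult_assoc)
  also have "\<dots> = e0 + \<alpha> *s c"
    unfolding e0_def \<alpha>_def
    by (subst Bochner_Integration.integral_add[OF int1 integral_smul_const(1)[OF hmint]])
       (simp add: integral_smul_const(2)[OF hmint])
  also have "\<dots> = d" using \<alpha>0 by (simp add: c_def vector_smult_assoc)
  finally have intd: "(\<integral>x. h x *s \<Phi> x \<partial>M) = d" .
  have Zdisj: "x \<in> Z \<Longrightarrow> \<Psi> x = 0" for x
    by (simp add: Z_def \<Psi>_def F_def vec_eq_iff)
  have nondeg: "v = 0" if ae: "AE x in M. \<bar>rinner v (\<Phi> x)\<bar> = 0" for v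
  proof -
    define cc where "cc j = v $ (inv_into UNIV e j)" for j
    have cce: "cc (e i) = v $ i" for i by (simp add: cc_def inv_into_f_f[OF einj])
    have "AE x in M. x \<in> Y \<longrightarrow> (\<Sum>j<CARD('n). cc j * f j x) = 0"
      using ae
    proof eventually_elim
      case (elim x)
      show ?case
      proof
        assume xY: "x \<in> Y"
        then have "x \<notin> Z" by (simp add: Z_def)
        then have "\<Phi> x = \<Psi> x" by (simp add: \<Phi>_def m_def)
        with elim have "(\<Sum>i\<in>UNIV. v $ i * F i x) = 0"
          by (simp add: rinner_def \<Psi>_def)
        then have "(\<Sum>i\<in>UNIV. cc (e i) * f (e i) x) = 0" using xY by (simp add: F_def cce)
        moreover have "(\<Sum>i\<in>UNIV. cc (e i) * f (e i) x) = (\<Sum>j\<in>{0..<CARD('n)}. cc j * f j x)"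
          by (rule sum.reindex_bij_betw[OF e])
        ultimately show "(\<Sum>j<CARD('n). cc j * f j x) = 0" by (simp add: atLeast0LessThan)
      qed
    qed
    then have "AE x in restrict_space M Y. (\<Sum>j<CARD('n). cc j * f j x) = 0"
      by (simp add: AE_restrict_space_iff[OF YM])
    then have "\<forall>j<CARD('n). cc j = 0" by (rule indep)
    then show "v = 0" using eless by (auto simp: vec_eq_iff simp flip: cce)
  qed
  have fb: "\<exists>A B. 0 < A \<and> A \<le> B \<and> (\<forall>v. ennreal (A * (norm v)\<^sup>2) \<le> (\<integral>\<^sup>+x. ennreal ((\<bar>rinner v (\<Phi> x)\<bar>)\<^sup>2) \<partial>M) \<and>
           (\<integral>\<^sup>+x. ennreal ((\<bar>rinner v (\<Phi> x)\<bar>)\<^sup>2) \<partial>M) \<le> ennreal (B * (norm v)\<^sup>2))"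
  proof (rule frame_bounds[where g="\<lambda>x. norm (\<Phi> x)"])
    show "(\<lambda>x. \<bar>rinner v (\<Phi> x)\<bar>) \<in> borel_measurable M" for v
      unfolding rinner_inner using \<Phi>m by measurable
    show "(\<lambda>x. norm (\<Phi> x)) \<in> borel_measurable M" using \<Phi>m by measurable
    show "integrable M (\<lambda>x. (norm (\<Phi> x))\<^sup>2)" using \<Phi>L2 by (rule L2_D)
    show "\<bar>\<bar>rinner v (\<Phi> x)\<bar> - \<bar>rinner w (\<Phi> x)\<bar>\<bar> \<le> norm (v - w) * norm (\<Phi> x)" for v w x
    proof -
      have "\<bar>\<bar>rinner v (\<Phi> x)\<bar> - \<bar>rinner w (\<Phi> x)\<bar>\<bar> \<le> \<bar>inner (v - w) (\<Phi> x)\<bar>"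
        unfolding rinner_inner inner_diff_left by (rule abs_triangle_ineq3)
      also have "\<dots> \<le> norm (v - w) * norm (\<Phi> x)" by (rule Cauchy_Schwarz_ineq2)
      finally show ?thesis .
    qed
    show "\<bar>rinner 0 (\<Phi> x)\<bar> = 0" for x by (simp add: rinner_inner)
    show "\<bar>rinner (t *\<^sub>R v) (\<Phi> x)\<bar> = \<bar>t\<bar> * \<bar>rinner v (\<Phi> x)\<bar>" for t v x
      by (simp add: rinner_inner abs_mult)
    show "v = 0" if "AE x in M. \<bar>rinner v (\<Phi> x)\<bar> = 0" for v using nondeg that .
  qed auto
  have "cont_frame_real M \<Phi>" unfolding cont_frame_real_def using \<Phi>m fb by blast
  with \<Phi>L2 intd show ?thesis by blast
qed




lemma cnj_meas[measurable (raw)]: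
  "f \<in> borel_measurable M \<Longrightarrow> (\<lambda>x. cnj (f x :: complex)) \<in> borel_measurable M"
  by (rule borel_measurable_continuous_on[where f=cnj]) (auto intro: continuous_intros)

lemma cinner_diff: "cinner (v - w) u = cinner v u - cinner w u"
  by (simp add: cinner_def ring_distribs sum_subtractf)

lemma cinner_scale: "cinner (t *\<^sub>R v) u = of_real t * cinner v u"
proof -
  have "(t *\<^sub>R v) $ i = complex_of_real t * v $ i" for i
    unfolding vector_scaleR_component by (rule scaleR_conv_of_real)
  then show ?thesis unfolding cinner_def by (simp add: sum_distrib_left mult.assoc)
qed

lemma cinner_zero: "cinner 0 u = 0"
  by (simp add: cinner_def)

lemma cinner_bound: "cmod (cinner v w) \<le> norm v * norm w"
proof -
  define a where "a = (\<chi> i. cmod (v $ i))"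
  define b where "b = (\<chi> i. cmod (w $ i))"
  have "cmod (cinner v w) \<le> (\<Sum>i\<in>UNIV. cmod (v $ i * cnj (w $ i)))"
    unfolding cinner_def by (rule norm_sum)
  also have "\<dots> = inner a b"
    by (simp add: a_def b_def inner_vec_def norm_mult)
  also have "\<dots> \<le> norm a * norm b" by (rule norm_cauchy_schwarz)
  also have "norm a = norm v" by (simp add: a_def norm_vec_def)
  also have "norm b = norm w" by (simp add: b_def norm_vec_def)
  finally show ?thesis .
qed

lemma complex_case:
  fixes M :: "'b measure" and h :: "'b \<Rightarrow> complex" and d :: "complex^'n"
  assumes h: "h \<in> L2 M" and Y: "Y \<in> sets M"
    and dim: "L2_dim_at_least TYPE(complex) (restrict_space M Y) CARD('n)"
    and pos: "emeasure M ((space M - Y) \<inter> {x \<in> space M. h x \<noteq> 0}) > 0"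
  shows "\<exists>\<Phi> :: 'b \<Rightarrow> complex^'n. \<Phi> \<in> L2 M \<and> cont_frame_complex M \<Phi> \<and> (\<integral>x. h x *s \<Phi> x \<partial>M) = d"
proof -
  obtain f :: "nat \<Rightarrow> 'b \<Rightarrow> complex" where fL2: "\<And>i. i < CARD('n) \<Longrightarrow> f i \<in> L2 (restrict_space M Y)"
    and indep: "\<And>c. (AE x in restrict_space M Y. (\<Sum>i<CARD('n). c i * f i x) = 0) \<Longrightarrow> \<forall>i<CARD('n). c i = 0"
    using dim unfolding L2_dim_at_least_def by blast
  obtain e :: "'n \<Rightarrow> nat" where e: "bij_betw e UNIV {0..<CARD('n)}"
    using ex_bij_betw_finite_nat[of "UNIV::'n set"] by auto
  have eless: "e i < CARD('n)" for i using e by (auto simp: bij_betw_def)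
  have einj: "inj e" using e by (auto simp: bij_betw_def)
  have YM: "Y \<inter> space M \<in> sets M" using Y by auto
  have hm[measurable]: "h \<in> borel_measurable M" using h by (simp add: L2_def)
  have [measurable]: "Y \<in> sets M" by (rule Y)
  define F where "F i x = indicator Y x * f (e i) x" for i x
  have Fm: "F i \<in> borel_measurable M" for i
  proof -
    have "f (e i) \<in> borel_measurable (restrict_space M Y)" using fL2[OF eless] by (simp add: L2_def)
    then have 1: "(\<lambda>x. indicator Y x *\<^sub>R f (e i) x) \<in> borel_measurable M"
      by (simp only: borel_measurable_restrict_space_iff[OF YM])
    have 2: "(\<lambda>x. indicator Y x *\<^sub>R f (e i) x) = F i"
      by (rule ext) (simp add: F_def indicator_def)
    show ?thesis using 1 unfolding 2 .
  qed
  have Fi: "integrable M (\<lambda>x. (norm (F i x))\<^sup>2)" for i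
  proof -
    have "integrable (restrict_space M Y) (\<lambda>x. (norm (f (e i) x))\<^sup>2)" using fL2[OF eless] by (simp add: L2_def)
    then have 1: "integrable M (\<lambda>x. indicator Y x *\<^sub>R (norm (f (e i) x))\<^sup>2)"
      by (simp only: integrable_restrict_space[OF YM])
    have 2: "(\<lambda>x. indicator Y x *\<^sub>R (norm (f (e i) x))\<^sup>2) = (\<lambda>x. (norm (F i x))\<^sup>2)"
      by (rule ext) (simp add: F_def indicator_def)
    show ?thesis using 1 unfolding 2 .
  qed
  define \<Psi> where "\<Psi> x = (\<chi> i. F i x)" for x
  have \<Psi>m: "\<Psi> \<in> borel_measurable M" by (rule vec_meas) (simp add: \<Psi>_def Fm)
  have norm\<Psi>: "(norm (\<Psi> x))\<^sup>2 = (\<Sum>i\<in>UNIV. (norm (F i x))\<^sup>2)" for x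
    by (simp add: \<Psi>_def norm_vec_def L2_set_def sum_nonneg)
  have "integrable M (\<lambda>x. \<Sum>i\<in>UNIV. (norm (F i x))\<^sup>2)"
    by (rule Bochner_Integration.integrable_sum) (rule Fi)
  then have \<Psi>L2: "\<Psi> \<in> L2 M" using \<Psi>m by (simp add: L2_def norm\<Psi>)
  define Z where "Z = (space M - Y) \<inter> {x \<in> space M. h x \<noteq> 0}"
  have Zm[measurable]: "Z \<in> sets M" unfolding Z_def by measurable
  define m where "m x = indicator Z x * cnj (h x)" for x
  have rint: "integrable M (\<lambda>x. indicator Z x *\<^sub>R (norm (h x))\<^sup>2)"
    by (rule integrable_mult_indicator[OF Zm]) (use h in \<open>simp add: L2_def\<close>)
  have mL2: "m \<in> L2 M"
  proof -
    have "m \<in> borel_measurable M" unfolding m_def by measurable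
    moreover have "(\<lambda>x. indicator Z x *\<^sub>R (norm (h x))\<^sup>2) = (\<lambda>x. (norm (m x))\<^sup>2)"
      by (rule ext) (simp add: m_def indicator_def)
    ultimately show ?thesis using rint by (simp add: L2_def)
  qed
  define \<beta> where "\<beta> = (\<integral>x. indicator Z x *\<^sub>R (norm (h x))\<^sup>2 \<partial>M)"
  define \<alpha> where "\<alpha> = (\<integral>x. h x * m x \<partial>M)"
  have hmint: "integrable M (\<lambda>x. h x * m x)" by (rule L2_times[OF h mL2])
  have hm_eq: "(\<lambda>x. h x * m x) = (\<lambda>x. complex_of_real (indicator Z x *\<^sub>R (norm (h x))\<^sup>2))"
  proof (rule ext)
    fix x
    have "h x * cnj (h x) = complex_of_real ((norm (h x))\<^sup>2)" by (rule complex_norm_square[symmetric])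
    then show "h x * m x = complex_of_real (indicator Z x *\<^sub>R (norm (h x))\<^sup>2)"
      by (simp add: m_def indicator_def)
  qed
  have \<alpha>\<beta>: "\<alpha> = complex_of_real \<beta>" unfolding \<alpha>_def \<beta>_def hm_eq by (rule integral_complex_of_real)
  have \<alpha>0: "\<alpha> \<noteq> 0"
  proof
    assume "\<alpha> = 0"
    then have "\<beta> = 0" using \<alpha>\<beta> by simp
    then have "AE x in M. indicator Z x *\<^sub>R (norm (h x))\<^sup>2 = 0"
      unfolding \<beta>_def using integral_nonneg_eq_0_iff_AE[OF rint] by simp
    then have "AE x in M. x \<notin> Z"
      by eventually_elim (auto simp: Z_def indicator_def)
    then have "emeasure M Z = 0"
      using AE_iff_measurable[OF Zm, of "\<lambda>x. x \<notin> Z"] sets.sets_into_space[OF Zm] by auto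
    with pos show False unfolding Z_def by simp
  qed
  define e0 where "e0 = (\<integral>x. h x *s \<Psi> x \<partial>M)"
  define c where "c = inverse \<alpha> *s (d - e0)"
  define \<Phi> where "\<Phi> x = \<Psi> x + m x *s c" for x
  have \<Phi>L2: "\<Phi> \<in> L2 M" unfolding \<Phi>_def by (rule L2_add[OF \<Psi>L2 L2_smul_const[OF mL2]])
  have \<Phi>m: "\<Phi> \<in> borel_measurable M" using \<Phi>L2 by (rule L2_D)
  have int1: "integrable M (\<lambda>x. h x *s \<Psi> x)" by (rule L2_smul_int[OF h \<Psi>L2])
  have "(\<integral>x. h x *s \<Phi> x \<partial>M) = (\<integral>x. h x *s \<Psi> x + (h x * m x) *s c \<partial>M)"
    unfolding \<Phi>_def by (simp add: vector_add_ldistrib vector_smult_assoc)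
  also have "\<dots> = e0 + \<alpha> *s c"
    unfolding e0_def \<alpha>_def
    by (subst Bochner_Integration.integral_add[OF int1 integral_smul_const(1)[OF hmint]])
       (simp add: integral_smul_const(2)[OF hmint])
  also have "\<dots> = d" using \<alpha>0 by (simp add: c_def vector_smult_assoc)
  finally have intd: "(\<integral>x. h x *s \<Phi> x \<partial>M) = d" .
  have nondeg: "v = 0" if ae: "AE x in M. cmod (cinner v (\<Phi> x)) = 0" for v
  proof -
    define cc where "cc j = cnj (v $ (inv_into UNIV e j))" for j
    have cce: "cc (e i) = cnj (v $ i)" for i by (simp add: cc_def inv_into_f_f[OF einj])
    have "AE x in M. x \<in> Y \<longrightarrow> (\<Sum>j<CARD('n). cc j * f j x) = 0"
      using ae
    proof eventually_elim
      case (elim x)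
      show ?case
      proof
        assume xY: "x \<in> Y"
        then have "x \<notin> Z" by (simp add: Z_def)
        then have "\<Phi> x = \<Psi> x" by (simp add: \<Phi>_def m_def)
        with elim have "(\<Sum>i\<in>UNIV. v $ i * cnj (F i x)) = 0"
          by (simp add: cinner_def \<Psi>_def)
        then have "cnj (\<Sum>i\<in>UNIV. v $ i * cnj (F i x)) = 0" by simp
        then have "(\<Sum>i\<in>UNIV. cc (e i) * f (e i) x) = 0" using xY by (simp add: F_def cce)
        moreover have "(\<Sum>i\<in>UNIV. cc (e i) * f (e i) x) = (\<Sum>j\<in>{0..<CARD('n)}. cc j * f j x)"
          by (rule sum.reindex_bij_betw[OF e])
        ultimately show "(\<Sum>j<CARD('n). cc j * f j x) = 0" by (simp add: atLeast0LessThan)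
      qed
    qed
    then have "AE x in restrict_space M Y. (\<Sum>j<CARD('n). cc j * f j x) = 0"
      by (simp add: AE_restrict_space_iff[OF YM])
    then have "\<forall>j<CARD('n). cc j = 0" by (rule indep)
    then have "cnj (v $ i) = 0" for i using eless[of i] by (simp flip: cce)
    then show "v = 0" by (simp add: vec_eq_iff)
  qed
  have fb: "\<exists>A B. 0 < A \<and> A \<le> B \<and> (\<forall>v. ennreal (A * (norm v)\<^sup>2) \<le> (\<integral>\<^sup>+x. ennreal ((cmod (cinner v (\<Phi> x)))\<^sup>2) \<partial>M) \<and>
           (\<integral>\<^sup>+x. ennreal ((cmod (cinner v (\<Phi> x)))\<^sup>2) \<partial>M) \<le> ennreal (B * (norm v)\<^sup>2))"
  proof (rule frame_bounds[where g="\<lambda>x. norm (\<Phi> x)"])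
    show "(\<lambda>x. cmod (cinner v (\<Phi> x))) \<in> borel_measurable M" for v
      unfolding cinner_def using \<Phi>m by measurable
    show "(\<lambda>x. norm (\<Phi> x)) \<in> borel_measurable M" using \<Phi>m by measurable
    show "integrable M (\<lambda>x. (norm (\<Phi> x))\<^sup>2)" using \<Phi>L2 by (rule L2_D)
    show "\<bar>cmod (cinner v (\<Phi> x)) - cmod (cinner w (\<Phi> x))\<bar> \<le> norm (v - w) * norm (\<Phi> x)" for v w x
    proof -
      have "\<bar>cmod (cinner v (\<Phi> x)) - cmod (cinner w (\<Phi> x))\<bar> \<le> cmod (cinner (v - w) (\<Phi> x))"
        unfolding cinner_diff by (rule norm_triangle_ineq3)
      also have "\<dots> \<le> norm (v - w) * norm (\<Phi> x)" by (rule cinner_bound)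
      finally show ?thesis .
    qed
    show "cmod (cinner 0 (\<Phi> x)) = 0" for x by (simp add: cinner_zero)
    show "cmod (cinner (t *\<^sub>R v) (\<Phi> x)) = \<bar>t\<bar> * cmod (cinner v (\<Phi> x))" for t v x
      by (simp add: cinner_scale norm_mult)
    show "v = 0" if "AE x in M. cmod (cinner v (\<Phi> x)) = 0" for v using nondeg that .
  qed auto
  have "cont_frame_complex M \<Phi>" unfolding cont_frame_complex_def using \<Phi>m fb by blast
  with \<Phi>L2 intd show ?thesis by blast
qed


theorem proposition5p7:
  fixes M :: "'b measure"
  shows "(\<forall>(h :: 'b \<Rightarrow> real) Y.
            h \<in> L2 M \<and> Y \<in> sets M \<and>
            L2_dim_at_least TYPE(real) (restrict_space M Y) CARD('n) \<and>
            emeasure M ((space M - Y) \<inter> {x \<in> space M. h x \<noteq> 0}) > 0 \<longrightarrow>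
            (\<forall>d :: real^'n. \<exists>\<Phi> :: 'b \<Rightarrow> real^'n.
                \<Phi> \<in> L2 M \<and> cont_frame_real M \<Phi> \<and> (\<integral>x. h x *s \<Phi> x \<partial>M) = d))
       \<and> (\<forall>(h :: 'b \<Rightarrow> complex) Y.
            h \<in> L2 M \<and> Y \<in> sets M \<and>
            L2_dim_at_least TYPE(complex) (restrict_space M Y) CARD('n) \<and>
            emeasure M ((space M - Y) \<inter> {x \<in> space M. h x \<noteq> 0}) > 0 \<longrightarrow>
            (\<forall>d :: complex^'n. \<exists>\<Phi> :: 'b \<Rightarrow> complex^'n.
                \<Phi> \<in> L2 M \<and> cont_frame_complex M \<Phi> \<and> (\<integral>x. h x *s \<Phi> x \<partial>M) = d))"
  apply (intro conjI allI impI)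
   apply (elim conjE, rule real_case, assumption+)
  apply (elim conjE, rule complex_case, assumption+)
  done

end
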